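(* Let $C=c_0c_1\dots c_{m-1}c_0$ and $D=(0)(1)\dots(n-1)(0)$ be reflexive digraph cycles with $D$ non-contractible. The subgraph $\mathrm{Mon}_0(C,D)$ of $\mathrm{Hom}(C,D)$ induced by the monotone homomorphisms of wind $0$ is isomorphic to $D$.
   Context: A digraph is a binary relation $\to$ on a finite vertex set; reflexive means every vertex has a loop. A digraph cycle $C=c_0c_1\dots c_{m-1}c_0$ (indices mod $m$, $m\ge3$) has underlying graph the cycle with edges $c_ic_{i+1}$; $D=(0)(1)\dots(n-1)(0)$ has vertex set the integers mod $n$. $D$ is non-contractible if it has length at least $4$ or is a directed $3$-cycle. A homomorphism $\phi:C\to D$ satisfies $u\to v\Rightarrow\phi(u)\to\phi(v)$. $\mathrm{Hom}(C,D)$ is the digraph whose vertices are the homomorphisms $C\to D$ with $\phi\to\phi'$ iff $\phi(u)\to\phi'(v)$ for all arcs $u\to v$ of $C$. Under $\phi$, edge $c_ic_{i+1}$ is increasing, stationary or decreasing as $\phi(c_{i+1})-\phi(c_i)$ is $1,0,-1$ (mod $n$); the increase of $\phi$ is the number of increasing minus the number of decreasing edges, and the wind is the increase divided by $n$. A homomorphism is monotone if every edge is increasing or stationary, or every edge is decreasing or stationary (so the constant maps are exactly the monotone wind-$0$ maps). *)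

theory Defs
  imports Complex_Main "HOL-Library.FuncSet"
begin

definition refl_dicycle :: "nat \<Rightarrow> (nat \<Rightarrow> nat \<Rightarrow> bool) \<Rightarrow> bool" where
  "refl_dicycle k R \<longleftrightarrow> k \<ge> 3
     \<and> (\<forall>u v. R u v \<longrightarrow> u < k \<and> v < k)
     \<and> (\<forall>u<k. R u u)
     \<and> (\<forall>u<k. \<forall>v<k. u \<noteq> v \<longrightarrow>
           ((R u v \<or> R v u) \<longleftrightarrow> (v = Suc u mod k \<or> u = Suc v mod k)))"

definition directed_3cycle :: "nat \<Rightarrow> (nat \<Rightarrow> nat \<Rightarrow> bool) \<Rightarrow> bool" where
  "directed_3cycle k R \<longleftrightarrow> k = 3 \<and>
     ((\<forall>i<k. R i (Suc i mod k) \<and> \<not> R (Suc i mod k) i) \<or>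
      (\<forall>i<k. R (Suc i mod k) i \<and> \<not> R i (Suc i mod k)))"

definition non_contractible :: "nat \<Rightarrow> (nat \<Rightarrow> nat \<Rightarrow> bool) \<Rightarrow> bool" where
  "non_contractible k R \<longleftrightarrow> k \<ge> 4 \<or> directed_3cycle k R"

definition homs :: "nat \<Rightarrow> (nat \<Rightarrow> nat \<Rightarrow> bool) \<Rightarrow> nat \<Rightarrow> (nat \<Rightarrow> nat \<Rightarrow> bool) \<Rightarrow> (nat \<Rightarrow> nat) set" where
  "homs m C n D = {\<phi> \<in> {0..<m} \<rightarrow>\<^sub>E {0..<n}. \<forall>u<m. \<forall>v<m. C u v \<longrightarrow> D (\<phi> u) (\<phi> v)}"

definition hom_arc :: "nat \<Rightarrow> (nat \<Rightarrow> nat \<Rightarrow> bool) \<Rightarrow> (nat \<Rightarrow> nat \<Rightarrow> bool) \<Rightarrow> (nat \<Rightarrow> nat) \<Rightarrow> (nat \<Rightarrow> nat) \<Rightarrow> bool" where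
  "hom_arc m C D \<phi> \<psi> \<longleftrightarrow> (\<forall>u<m. \<forall>v<m. C u v \<longrightarrow> D (\<phi> u) (\<psi> v))"

definition edge_increasing :: "nat \<Rightarrow> nat \<Rightarrow> (nat \<Rightarrow> nat) \<Rightarrow> nat \<Rightarrow> bool" where
  "edge_increasing m n \<phi> i \<longleftrightarrow> (int (\<phi> (Suc i mod m)) - int (\<phi> i)) mod int n = 1 mod int n"

definition edge_stationary :: "nat \<Rightarrow> nat \<Rightarrow> (nat \<Rightarrow> nat) \<Rightarrow> nat \<Rightarrow> bool" where
  "edge_stationary m n \<phi> i \<longleftrightarrow> (int (\<phi> (Suc i mod m)) - int (\<phi> i)) mod int n = 0"

definition edge_decreasing :: "nat \<Rightarrow> nat \<Rightarrow> (nat \<Rightarrow> nat) \<Rightarrow> nat \<Rightarrow> bool" where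
  "edge_decreasing m n \<phi> i \<longleftrightarrow> (int (\<phi> (Suc i mod m)) - int (\<phi> i)) mod int n = (-1) mod int n"

definition increase :: "nat \<Rightarrow> nat \<Rightarrow> (nat \<Rightarrow> nat) \<Rightarrow> int" where
  "increase m n \<phi> = int (card {i. i < m \<and> edge_increasing m n \<phi> i})
                    - int (card {i. i < m \<and> edge_decreasing m n \<phi> i})"

definition wind :: "nat \<Rightarrow> nat \<Rightarrow> (nat \<Rightarrow> nat) \<Rightarrow> real" where
  "wind m n \<phi> = real_of_int (increase m n \<phi>) / real n"

definition monotone_hom :: "nat \<Rightarrow> nat \<Rightarrow> (nat \<Rightarrow> nat) \<Rightarrow> bool" where
  "monotone_hom m n \<phi> \<longleftrightarrow>
     (\<forall>i<m. edge_increasing m n \<phi> i \<or> edge_stationary m n \<phi> i) \<or>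
     (\<forall>i<m. edge_decreasing m n \<phi> i \<or> edge_stationary m n \<phi> i)"

definition Mon0 :: "nat \<Rightarrow> (nat \<Rightarrow> nat \<Rightarrow> bool) \<Rightarrow> nat \<Rightarrow> (nat \<Rightarrow> nat \<Rightarrow> bool) \<Rightarrow> (nat \<Rightarrow> nat) set" where
  "Mon0 m C n D = {\<phi> \<in> homs m C n D. monotone_hom m n \<phi> \<and> wind m n \<phi> = 0}"

end

theory Submission
  imports Defs
begin

lemma modeq0: "n \<ge> 3 \<Longrightarrow> a < n \<Longrightarrow> b < n \<Longrightarrow> (int a - int b) mod int n = 0 \<Longrightarrow> a = b"
proof -
  assume h: "n \<ge> 3" "a < n" "b < n" "(int a - int b) mod int n = 0"
  then have "int n dvd (int a - int b)" by (simp add: mod_eq_0_iff_dvd)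
  then obtain k where k: "int a - int b = int n * k" by (auto simp: dvd_def)
  have "k = 0"
  proof (rule ccontr)
    assume "k \<noteq> 0"
    then have "1 \<le> \<bar>k\<bar>" by linarith
    then have "int n * 1 \<le> int n * \<bar>k\<bar>" by (rule mult_left_mono) simp
    then have "\<bar>int n * k\<bar> \<ge> int n" by (simp add: abs_mult)
    with k h show False by linarith
  qed
  with k show ?thesis by simp
qed

lemma modfacts:
  assumes "n \<ge> (3::nat)"
  shows "(1::int) mod int n \<noteq> 0" "(-1::int) mod int n \<noteq> 0" "(1::int) mod int n \<noteq> (-1) mod int n"
proof -
  have a: "(1::int) mod int n = 1" using assms by simp
  have b: "(-1::int) mod int n = int n - 1" using assms by (intro zmod_minus1) simp
  have c: "int n \<ge> 3" using assms by simp
  show "(1::int) mod int n \<noteq> 0" "(-1::int) mod int n \<noteq> 0" "(1::int) mod int n \<noteq> (-1) mod int n"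
    unfolding a b using c by linarith+
qed

lemma all_stat_const:
  assumes "n \<ge> 3" "\<phi> \<in> {0..<m} \<rightarrow> {0..<n}" "\<forall>i<m. edge_stationary m n \<phi> i"
  shows "\<forall>i<m. \<phi> i = \<phi> 0"
proof (intro allI impI)
  fix i assume "i < m"
  then show "\<phi> i = \<phi> 0"
  proof (induction i)
    case 0 then show ?case by simp
  next
    case (Suc i)
    have "edge_stationary m n \<phi> i" using assms(3) Suc by simp
    moreover have "Suc i mod m = Suc i" using Suc by simp
    ultimately have md: "(int (\<phi> (Suc i)) - int (\<phi> i)) mod int n = 0"
      unfolding edge_stationary_def by (simp only:)
    have l1: "\<phi> (Suc i) \<in> {0..<n}" using assms(2) Suc.prems by (intro funcset_mem[of \<phi>]) auto
    have l2: "\<phi> i \<in> {0..<n}" using assms(2) Suc.prems by (intro funcset_mem[of \<phi>]) auto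
    have "\<phi> (Suc i) = \<phi> i" using modeq0[OF assms(1) _ _ md] l1 l2 by simp
    then show ?case using Suc by simp
  qed
qed

lemma mon0_all_stat:
  assumes n3: "n \<ge> 3" and mon: "monotone_hom m n \<phi>" and w: "wind m n \<phi> = 0"
  shows "\<forall>i<m. edge_stationary m n \<phi> i"
proof -
  note mf = modfacts[OF n3]
  have incr0: "increase m n \<phi> = 0" using w n3 unfolding wind_def by simp
  have fin1: "finite {i. i < m \<and> edge_increasing m n \<phi> i}" by simp
  have fin2: "finite {i. i < m \<and> edge_decreasing m n \<phi> i}" by simp
  from mon show ?thesis unfolding monotone_hom_def
  proof
    assume A: "\<forall>i<m. edge_increasing m n \<phi> i \<or> edge_stationary m n \<phi> i"
    have "{i. i < m \<and> edge_decreasing m n \<phi> i} = {}"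
      using A mf unfolding edge_increasing_def edge_stationary_def edge_decreasing_def by force
    then have "card {i. i < m \<and> edge_increasing m n \<phi> i} = 0" using incr0
      unfolding increase_def by simp
    then have "{i. i < m \<and> edge_increasing m n \<phi> i} = {}" using fin1 by simp
    then show ?thesis using A by blast
  next
    assume A: "\<forall>i<m. edge_decreasing m n \<phi> i \<or> edge_stationary m n \<phi> i"
    have e: "{i. i < m \<and> edge_increasing m n \<phi> i} = {}"
      using A mf unfolding edge_increasing_def edge_stationary_def edge_decreasing_def by force
    have "card {i. i < m \<and> edge_decreasing m n \<phi> i} = card {i. i < m \<and> edge_increasing m n \<phi> i}"
      using incr0 unfolding increase_def by linarith
    also have "\<dots> = 0" unfolding e by simp
    finally have "card {i. i < m \<and> edge_decreasing m n \<phi> i} = 0" .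
    then have "{i. i < m \<and> edge_decreasing m n \<phi> i} = {}" using fin2 by simp
    then show ?thesis using A by blast
  qed
qed

definition kappa :: "nat \<Rightarrow> nat \<Rightarrow> nat \<Rightarrow> nat" where
  "kappa m c = (\<lambda>i. if i < m then c else undefined)"

lemma Mon0_eq:
  assumes "refl_dicycle m C" "refl_dicycle n D"
  shows "Mon0 m C n D = kappa m ` {0..<n}"
proof
  have n3: "n \<ge> 3" using assms(2) unfolding refl_dicycle_def by simp
  have m3: "m \<ge> 3" using assms(1) unfolding refl_dicycle_def by simp
  show "Mon0 m C n D \<subseteq> kappa m ` {0..<n}"
  proof
    fix \<phi> assume p: "\<phi> \<in> Mon0 m C n D"
    then have ph: "\<phi> \<in> {0..<m} \<rightarrow>\<^sub>E {0..<n}" "monotone_hom m n \<phi>" "wind m n \<phi> = 0"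
      using p unfolding Mon0_def homs_def by blast+
    have pi: "\<phi> \<in> {0..<m} \<rightarrow> {0..<n}" using ph(1) unfolding PiE_def by blast
    have cst: "\<forall>i<m. \<phi> i = \<phi> 0"
      using all_stat_const[OF n3 pi mon0_all_stat[OF n3 ph(2) ph(3)]] .
    have "\<phi> = kappa m (\<phi> 0)"
    proof (rule ext)
      fix i show "\<phi> i = kappa m (\<phi> 0) i"
      proof (cases "i < m")
        case True
        then have "\<phi> i = \<phi> 0" using cst by blast
        then show ?thesis using True unfolding kappa_def by (simp only: if_True)
      next
        case False
        then have "\<phi> i = undefined" using PiE_arb[OF ph(1), of i] by simp
        then show ?thesis using False unfolding kappa_def by (simp only: if_False)
      qed
    qed
    moreover have "\<phi> 0 \<in> {0..<n}" using pi m3 by (intro funcset_mem[of \<phi>]) auto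
    ultimately show "\<phi> \<in> kappa m ` {0..<n}" by (rule image_eqI)
  qed
  show "kappa m ` {0..<n} \<subseteq> Mon0 m C n D"
  proof
    fix \<phi> assume "\<phi> \<in> kappa m ` {0..<n}"
    then obtain c where c: "c < n" "\<phi> = kappa m c" by auto
    have Dc: "D c c" using assms(2) c unfolding refl_dicycle_def by simp
    have pe: "kappa m c \<in> {0..<m} \<rightarrow>\<^sub>E {0..<n}" using c unfolding kappa_def PiE_def Pi_def extensional_def by simp
    have hom: "\<phi> \<in> homs m C n D" using c(2) pe Dc unfolding homs_def by (simp add: kappa_def)
    have ne: "\<forall>i<m. \<phi> (Suc i mod m) = \<phi> i" using c(2) m3 unfolding kappa_def by simp
    have st: "\<forall>i<m. edge_stationary m n \<phi> i" using ne
      unfolding edge_stationary_def by simp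
    have mono: "monotone_hom m n \<phi>" using st unfolding monotone_hom_def by simp
    note mf = modfacts[OF n3]
    have e1: "{i. i < m \<and> edge_increasing m n \<phi> i} = {}"
      using ne mf(1) unfolding edge_increasing_def by simp
    have e2: "{i. i < m \<and> edge_decreasing m n \<phi> i} = {}"
      using ne mf(2) unfolding edge_decreasing_def by simp
    have "wind m n \<phi> = 0" unfolding wind_def increase_def e1 e2 by simp
    then show "\<phi> \<in> Mon0 m C n D" using hom mono unfolding Mon0_def by simp
  qed
qed

theorem fact3p1:
  fixes m n :: nat and C D :: "nat \<Rightarrow> nat \<Rightarrow> bool"
  assumes "refl_dicycle m C" and "refl_dicycle n D" and "non_contractible n D"
  shows "\<exists>f. bij_betw f (Mon0 m C n D) {0..<n} \<and>
           (\<forall>\<phi>\<in>Mon0 m C n D. \<forall>\<psi>\<in>Mon0 m C n D. hom_arc m C D \<phi> \<psi> \<longleftrightarrow> D (f \<phi>) (f \<psi>))"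
proof -
  have m3: "m \<ge> 3" using assms(1) unfolding refl_dicycle_def by simp
  have k0: "\<And>c. kappa m c 0 = c" using m3 unfolding kappa_def by simp
  have E: "Mon0 m C n D = kappa m ` {0..<n}" by (rule Mon0_eq[OF assms(1,2)])
  have bij: "bij_betw (\<lambda>\<phi>. \<phi> 0) (Mon0 m C n D) {0..<n}"
    unfolding E bij_betw_def
  proof
    show "inj_on (\<lambda>\<phi>. \<phi> 0) (kappa m ` {0..<n})"
      by (rule inj_onI) (auto simp: k0)
    show "(\<lambda>\<phi>. \<phi> 0) ` kappa m ` {0..<n} = {0..<n}"
      by (auto simp: k0 image_image)
  qed
  have arc: "\<forall>\<phi>\<in>Mon0 m C n D. \<forall>\<psi>\<in>Mon0 m C n D. hom_arc m C D \<phi> \<psi> \<longleftrightarrow> D (\<phi> 0) (\<psi> 0)"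
  proof (intro ballI)
    fix \<phi> \<psi> assume "\<phi> \<in> Mon0 m C n D" "\<psi> \<in> Mon0 m C n D"
    then obtain a b where ab: "\<phi> = kappa m a" "\<psi> = kappa m b" unfolding E by auto
    have C00: "C 0 0" using assms(1) m3 unfolding refl_dicycle_def by simp
    show "hom_arc m C D \<phi> \<psi> \<longleftrightarrow> D (\<phi> 0) (\<psi> 0)"
    proof
      assume "hom_arc m C D \<phi> \<psi>"
      then have "D (\<phi> 0) (\<psi> 0)" unfolding hom_arc_def using C00 m3 by simp
      then show "D (\<phi> 0) (\<psi> 0)" .
    next
      assume "D (\<phi> 0) (\<psi> 0)"
      moreover have "\<phi> 0 = a" "\<psi> 0 = b" using m3 unfolding ab kappa_def by auto
      ultimately have Dab: "D a b" by simp
      show "hom_arc m C D \<phi> \<psi>" unfolding hom_arc_def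
      proof (intro allI impI)
        fix u v assume uv: "u < m" "v < m" "C u v"
        have "\<phi> u = a" "\<psi> v = b" using uv unfolding ab kappa_def by auto
        then show "D (\<phi> u) (\<psi> v)" using Dab by simp
      qed
    qed
  qed
  show ?thesis using bij arc by blast
qed

end
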